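(* Let $\alpha:X\to P(A\times X+1)$ be a discrete probabilistic transition system, $\langle\!\langle-\rangle\!\rangle:X\to\mathcal M(A^\infty)$ its trace semantics, and $\beta$ and $\varphi_\beta$ as in the context. Then for all $x,y\in X$: $\langle\!\langle x\rangle\!\rangle=\langle\!\langle y\rangle\!\rangle$ if and only if $\varphi_\beta(\delta_x)=\varphi_\beta(\delta_y)$.
   Context: $X$ a set, $A$ a finite alphabet, $1=\{*\}$, $\mathbb I=[0,1]$; $P(Y)$ is the set of finitely supported probability distributions on $Y$; $\delta_x$ the point mass at $x$. $A^\infty=A^*\cup A^\omega$ with $\sigma$-algebra generated by $\{\emptyset\}\cup\{\{w\}\mid w\in A^*\}\cup\{wA^\infty\mid w\in A^*\}$, and $\mathcal M(A^\infty)$ is the set of sub-probability measures on it. The trace semantics $\langle\!\langle x\rangle\!\rangle\in\mathcal M(A^\infty)$ is the unique family of measures with $\langle\!\langle x\rangle\!\rangle(A^\infty)=1$, $\langle\!\langle x\rangle\!\rangle(\{\varepsilon\})=\alpha(x)( * )$, $\langle\!\langle x\rangle\!\rangle(awA^\infty)=\sum_y\alpha(x)(a,y)\langle\!\langle y\rangle\!\rangle(wA^\infty)$, $\langle\!\langle x\rangle\!\rangle(\{aw\})=\sum_y\alpha(x)(a,y)\langle\!\langle y\rangle\!\rangle(\{w\})$. Let $\mathbb R^X_\omega$ be the real vector space of finitely supported functions $X\to\mathbb R$, and $\beta=\langle\beta_1,\beta_*,a\mapsto\tau_a\rangle:\mathbb R^X_\omega\to\mathbb R\times\mathbb R\times(\mathbb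 R^X_\omega)^A$ the linear maps $\beta_1(u)=\sum_{x}u(x)\sum_{z\in A\times X+1}\alpha(x)(z)=\sum_x u(x)$, $\beta_*(u)=\sum_x u(x)\alpha(x)( * )$, $\tau_a(u)(y)=\sum_x u(x)\alpha(x)(a,y)$. $\varphi_\beta:\mathbb R^X_\omega\to(\mathbb R\times\mathbb R)^{A^*}$ is the map $\varphi_\beta(u)(\varepsilon)=(\beta_1(u),\beta_*(u))$, $\varphi_\beta(u)(aw)=\varphi_\beta(\tau_a(u))(w)$ (the final-coalgebra morphism for the functor $Y\mapsto\mathbb R\times\mathbb R\times Y^A$). *)

theory Defs
  imports "HOL-Probability.Probability" "HOL-Library.Stream"
begin

text \<open>A discrete probabilistic transition system over alphabet 'a and states 'x is
  alpha :: 'x => ('a * 'x) option pmf with finite supports; None plays the role of *.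
  A^infinity = A^* + A^omega is modelled as 'a list + 'a stream.\<close>

definition cyl :: "'a list \<Rightarrow> ('a list + 'a stream) set" where
  "cyl w = {Inl v | v. take (length w) v = w} \<union> {Inr s | s. stake (length w) s = w}"

definition ainf_gens :: "('a list + 'a stream) set set" where
  "ainf_gens = {{}} \<union> {{Inl w} | w. True} \<union> {cyl w | w. True}"

definition ainf :: "('a list + 'a stream) measure" where
  "ainf = sigma UNIV ainf_gens"

definition is_trace_semantics ::
  "('x \<Rightarrow> ('a \<times> 'x) option pmf) \<Rightarrow> ('x \<Rightarrow> ('a list + 'a stream) measure) \<Rightarrow> bool" where
  "is_trace_semantics alpha tr \<longleftrightarrow>
    (\<forall>x. sets (tr x) = sets ainf \<and> subprob_space (tr x)
      \<and> emeasure (tr x) (space ainf) = 1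
      \<and> emeasure (tr x) {Inl []} = ennreal (pmf (alpha x) None)
      \<and> (\<forall>a w. emeasure (tr x) (cyl (a # w)) =
            (\<Sum>y\<in>{y. Some (a, y) \<in> set_pmf (alpha x)}.
               ennreal (pmf (alpha x) (Some (a, y))) * emeasure (tr y) (cyl w)))
      \<and> (\<forall>a w. emeasure (tr x) {Inl (a # w)} =
            (\<Sum>y\<in>{y. Some (a, y) \<in> set_pmf (alpha x)}.
               ennreal (pmf (alpha x) (Some (a, y))) * emeasure (tr y) {Inl w})))"

definition supp_fun :: "('x \<Rightarrow> real) \<Rightarrow> 'x set" where
  "supp_fun u = {x. u x \<noteq> 0}"

definition beta1 :: "('x \<Rightarrow> ('a \<times> 'x) option pmf) \<Rightarrow> ('x \<Rightarrow> real) \<Rightarrow> real" where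
  "beta1 alpha u = (\<Sum>x\<in>supp_fun u. u x * (\<Sum>z\<in>set_pmf (alpha x). pmf (alpha x) z))"

definition beta_star :: "('x \<Rightarrow> ('a \<times> 'x) option pmf) \<Rightarrow> ('x \<Rightarrow> real) \<Rightarrow> real" where
  "beta_star alpha u = (\<Sum>x\<in>supp_fun u. u x * pmf (alpha x) None)"

definition tau :: "('x \<Rightarrow> ('a \<times> 'x) option pmf) \<Rightarrow> 'a \<Rightarrow> ('x \<Rightarrow> real) \<Rightarrow> 'x \<Rightarrow> real" where
  "tau alpha a u y = (\<Sum>x\<in>supp_fun u. u x * pmf (alpha x) (Some (a, y)))"

fun phi_beta :: "('x \<Rightarrow> ('a \<times> 'x) option pmf) \<Rightarrow> ('x \<Rightarrow> real) \<Rightarrow> 'a list \<Rightarrow> real \<times> real" where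
  "phi_beta alpha u [] = (beta1 alpha u, beta_star alpha u)"
| "phi_beta alpha u (a # w) = phi_beta alpha (tau alpha a u) w"

definition delta :: "'x \<Rightarrow> 'x \<Rightarrow> real" where
  "delta x = (\<lambda>z. if z = x then 1 else 0)"

end

theory Submission
  imports Defs
begin

lemma cyl_Nil: "cyl [] = UNIV"
  unfolding cyl_def
  apply (rule set_eqI)
  subgoal for z by (cases z) auto
  done

lemma supp_tau_sub:
  assumes "finite (supp_fun u)"
  shows "supp_fun (tau alpha a u) \<subseteq> (\<Union>x\<in>supp_fun u. {y. Some (a, y) \<in> set_pmf (alpha x)})"
proof
  fix y assume "y \<in> supp_fun (tau alpha a u)"
  then have "(\<Sum>x\<in>supp_fun u. u x * pmf (alpha x) (Some (a, y))) \<noteq> 0"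
    by (simp add: supp_fun_def tau_def)
  then obtain x where "x \<in> supp_fun u" "u x * pmf (alpha x) (Some (a, y)) \<noteq> 0"
    using sum.not_neutral_contains_not_neutral by blast
  then show "y \<in> (\<Union>x\<in>supp_fun u. {y. Some (a, y) \<in> set_pmf (alpha x)})"
    by (auto simp: set_pmf_iff)
qed

lemma fin_S:
  assumes "finite (set_pmf (alpha x))"
  shows "finite {y. Some (a, y) \<in> set_pmf (alpha x)}"
proof -
  have "{y. Some (a, y) \<in> set_pmf (alpha x)} \<subseteq> (\<lambda>z. snd (the z)) ` set_pmf (alpha x)"
    by (auto intro!: image_eqI)
  then show ?thesis using assms finite_surj by blast
qed

lemma tau_sum:
  assumes fin: "\<forall>x. finite (set_pmf (alpha x))" and fu: "finite (supp_fun u)"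
  shows "(\<Sum>y\<in>supp_fun (tau alpha a u). tau alpha a u y * f y) =
    (\<Sum>x\<in>supp_fun u. u x * (\<Sum>y\<in>{y. Some (a, y) \<in> set_pmf (alpha x)}. pmf (alpha x) (Some (a, y)) * f y))"
proof -
  define T where "T = (\<Union>x\<in>supp_fun u. {y. Some (a, y) \<in> set_pmf (alpha x)})"
  have fT: "finite T" unfolding T_def
    apply (rule finite_UN_I[OF fu])
    apply (rule fin_S)
    using fin by blast
  have sub: "supp_fun (tau alpha a u) \<subseteq> T" unfolding T_def by (rule supp_tau_sub[OF fu])
  have "(\<Sum>y\<in>supp_fun (tau alpha a u). tau alpha a u y * f y) = (\<Sum>y\<in>T. tau alpha a u y * f y)"
    by (rule sum.mono_neutral_left[OF fT sub]) (simp add: supp_fun_def)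
  also have "\<dots> = (\<Sum>y\<in>T. \<Sum>x\<in>supp_fun u. u x * pmf (alpha x) (Some (a, y)) * f y)"
    by (simp add: tau_def sum_distrib_right)
  also have "\<dots> = (\<Sum>x\<in>supp_fun u. \<Sum>y\<in>T. u x * pmf (alpha x) (Some (a, y)) * f y)"
    by (rule sum.swap)
  also have "\<dots> = (\<Sum>x\<in>supp_fun u. u x * (\<Sum>y\<in>{y. Some (a, y) \<in> set_pmf (alpha x)}. pmf (alpha x) (Some (a, y)) * f y))"
  proof (rule sum.cong[OF refl])
    fix x assume x: "x \<in> supp_fun u"
    have s: "{y. Some (a, y) \<in> set_pmf (alpha x)} \<subseteq> T" using x unfolding T_def by blast
    have "(\<Sum>y\<in>T. pmf (alpha x) (Some (a, y)) * f y) = (\<Sum>y\<in>{y. Some (a, y) \<in> set_pmf (alpha x)}. pmf (alpha x) (Some (a, y)) * f y)"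
      by (rule sum.mono_neutral_right[OF fT s]) (simp add: set_pmf_iff)
    then show "(\<Sum>y\<in>T. u x * pmf (alpha x) (Some (a, y)) * f y) = u x * (\<Sum>y\<in>{y. Some (a, y) \<in> set_pmf (alpha x)}. pmf (alpha x) (Some (a, y)) * f y)"
      by (simp add: mult.assoc flip: sum_distrib_left)
  qed
  finally show ?thesis .
qed

lemma fin_supp_tau:
  assumes fin: "\<forall>x. finite (set_pmf (alpha x))" and fu: "finite (supp_fun u)"
  shows "finite (supp_fun (tau alpha a u))"
  apply (rule finite_subset[OF supp_tau_sub[OF fu]])
  apply (rule finite_UN_I[OF fu])
  apply (rule fin_S)
  using fin by blast

lemma meas_rec:
  assumes fin: "\<forall>x. finite (set_pmf (alpha x))" and tr: "is_trace_semantics alpha tr"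
  and eq: "\<And>x. emeasure (tr x) (C (a # w)) = (\<Sum>y\<in>{y. Some (a, y) \<in> set_pmf (alpha x)}.
               ennreal (pmf (alpha x) (Some (a, y))) * emeasure (tr y) (C w))"
  shows "measure (tr x) (C (a # w)) = (\<Sum>y\<in>{y. Some (a, y) \<in> set_pmf (alpha x)}.
               pmf (alpha x) (Some (a, y)) * measure (tr y) (C w))"
proof -
  have fm: "\<And>z. finite_measure (tr z)"
    using tr unfolding is_trace_semantics_def by (auto simp: subprob_space_def)
  have "ennreal (measure (tr x) (C (a # w))) = (\<Sum>y\<in>{y. Some (a, y) \<in> set_pmf (alpha x)}.
               ennreal (pmf (alpha x) (Some (a, y)) * measure (tr y) (C w)))"
    using eq[of x] fm by (simp add: finite_measure.emeasure_eq_measure ennreal_mult)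
  also have "\<dots> = ennreal (\<Sum>y\<in>{y. Some (a, y) \<in> set_pmf (alpha x)}.
               pmf (alpha x) (Some (a, y)) * measure (tr y) (C w))"
    by (rule sum_ennreal) simp
  finally show ?thesis
    by (subst (asm) ennreal_inj) (auto intro!: sum_nonneg)
qed

lemma phi_char:
  assumes fin: "\<forall>x. finite (set_pmf (alpha x))" and tr: "is_trace_semantics alpha tr"
  shows "finite (supp_fun u) \<Longrightarrow> phi_beta alpha u w =
     ((\<Sum>x\<in>supp_fun u. u x * measure (tr x) (cyl w)), (\<Sum>x\<in>supp_fun u. u x * measure (tr x) {Inl w}))"
proof (induction w arbitrary: u)
  case Nil
  have fm: "\<And>z. finite_measure (tr z)"
    using tr unfolding is_trace_semantics_def by (auto simp: subprob_space_def)
  have m1: "measure (tr x) (cyl []) = 1" for x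
  proof -
    have "emeasure (tr x) (cyl []) = 1" using tr unfolding is_trace_semantics_def
      by (simp add: cyl_Nil ainf_def)
    then show ?thesis using fm by (simp add: finite_measure.emeasure_eq_measure)
  qed
  have m2: "measure (tr x) {Inl []} = pmf (alpha x) None" for x
  proof -
    have "emeasure (tr x) {Inl []} = ennreal (pmf (alpha x) None)" using tr unfolding is_trace_semantics_def
      by simp
    then show ?thesis using fm by (simp add: finite_measure.emeasure_eq_measure)
  qed
  have s1: "(\<Sum>z\<in>set_pmf (alpha x). pmf (alpha x) z) = 1" for x
    using fin sum_pmf_eq_1 by blast
  show ?case by (simp add: beta1_def beta_star_def s1 m1 m2)
next
  case (Cons a w)
  have fm: "\<And>z. finite_measure (tr z)"
    using tr unfolding is_trace_semantics_def by (auto simp: subprob_space_def)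
  have r1: "measure (tr x) (cyl (a # w)) = (\<Sum>y\<in>{y. Some (a, y) \<in> set_pmf (alpha x)}.
               pmf (alpha x) (Some (a, y)) * measure (tr y) (cyl w))" for x
    by (rule meas_rec[OF fin tr]) (use tr in \<open>simp add: is_trace_semantics_def\<close>)
  have r2: "measure (tr x) ((\<lambda>w. {Inl w}) (a # w)) = (\<Sum>y\<in>{y. Some (a, y) \<in> set_pmf (alpha x)}.
               pmf (alpha x) (Some (a, y)) * measure (tr y) ((\<lambda>w. {Inl w}) w))" for x
    by (rule meas_rec[OF fin tr]) (use tr in \<open>simp add: is_trace_semantics_def\<close>)
  have ft: "finite (supp_fun (tau alpha a u))" by (rule fin_supp_tau[OF fin Cons.prems])
  have r2': "measure (tr x) {Inl (a # w)} = (\<Sum>y\<in>{y. Some (a, y) \<in> set_pmf (alpha x)}.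
               pmf (alpha x) (Some (a, y)) * measure (tr y) {Inl w})" for x
    using r2[of x] by simp
  have "phi_beta alpha u (a # w) = phi_beta alpha (tau alpha a u) w" by simp
  also have "\<dots> = ((\<Sum>x\<in>supp_fun (tau alpha a u). tau alpha a u x * measure (tr x) (cyl w)),
      (\<Sum>x\<in>supp_fun (tau alpha a u). tau alpha a u x * measure (tr x) {Inl w}))"
    by (rule Cons.IH[OF ft])
  also have "\<dots> = ((\<Sum>x\<in>supp_fun u. u x * measure (tr x) (cyl (a # w))),
      (\<Sum>x\<in>supp_fun u. u x * measure (tr x) {Inl (a # w)}))"
    by (simp only: tau_sum[OF fin Cons.prems] r1 r2')
  finally show ?case .
qed

lemma supp_delta: "supp_fun (delta x) = {x}"
  by (auto simp: supp_fun_def delta_def)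

lemma mem_cyl: "Inl u \<in> cyl v \<longleftrightarrow> take (length v) u = v" "Inr s \<in> cyl v \<longleftrightarrow> stake (length v) s = v"
  unfolding cyl_def by auto

lemma cyl_sub:
  assumes "length v \<le> length w" "take (length v) w = v"
  shows "cyl w \<subseteq> cyl v"
proof
  fix z assume z: "z \<in> cyl w"
  show "z \<in> cyl v"
  proof (cases z)
    case (Inl u)
    with z have "take (length w) u = w" by (simp add: mem_cyl)
    then have "take (length v) u = v"
      using assms by (metis min.absorb1 take_take)
    then show ?thesis using Inl by (simp add: mem_cyl)
  next
    case (Inr s)
    with z have "stake (length w) s = w" by (simp add: mem_cyl)
    then have "stake (length v) s = v"
      using assms by (metis min.absorb1 take_stake)
    then show ?thesis using Inr by (simp add: mem_cyl)
  qed
qed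

lemma cyl_disj:
  assumes "length v \<le> length w" "take (length v) w \<noteq> v"
  shows "cyl v \<inter> cyl w = {}"
proof (rule ccontr)
  assume "cyl v \<inter> cyl w \<noteq> {}"
  then obtain z where z: "z \<in> cyl v" "z \<in> cyl w" by blast
  show False
  proof (cases z)
    case (Inl u)
    with z have "take (length w) u = w" "take (length v) u = v" by (simp_all add: mem_cyl)
    then have "take (length v) w = v"
      using assms(1) by (metis min.absorb1 take_take)
    then show ?thesis using assms by simp
  next
    case (Inr s)
    with z have "stake (length w) s = w" "stake (length v) s = v" by (simp_all add: mem_cyl)
    then have "take (length v) w = v"
      using assms(1) by (metis min.absorb1 take_stake)
    then show ?thesis using assms by simp
  qed
qed

lemma cylcyl: "cyl v \<inter> cyl w \<in> ainf_gens"
proof -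
  have "cyl v \<inter> cyl w = {} \<or> cyl v \<inter> cyl w = cyl v \<or> cyl v \<inter> cyl w = cyl w"
  proof (cases "length v \<le> length w")
    case True
    then show ?thesis using cyl_sub[OF True] cyl_disj[OF True] by (cases "take (length v) w = v") auto
  next
    case False
    then have le: "length w \<le> length v" by simp
    show ?thesis using cyl_sub[OF le] cyl_disj[OF le] by (cases "take (length w) v = w") auto
  qed
  then show ?thesis unfolding ainf_gens_def by blast
qed

lemma Inlcyl: "{Inl v} \<inter> cyl w \<in> ainf_gens"
  by (cases "Inl v \<in> cyl w") (auto simp: ainf_gens_def)

lemma ist: "Int_stable (ainf_gens :: ('a list + 'a stream) set set)"
proof (rule Int_stableI)
  fix a b :: "('a list + 'a stream) set" assume "a \<in> ainf_gens" "b \<in> ainf_gens"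
  then show "a \<inter> b \<in> ainf_gens"
    unfolding ainf_gens_def
    apply (elim UnE CollectE exE conjE singletonE)
    using cylcyl Inlcyl
    by (auto simp: ainf_gens_def Int_commute)
qed

theorem mainTheorem16:
  fixes alpha :: "'x \<Rightarrow> ('a::finite \<times> 'x) option pmf"
    and tr :: "'x \<Rightarrow> ('a list + 'a stream) measure"
    and x y :: 'x
  assumes "\<forall>x. finite (set_pmf (alpha x))"
    and "is_trace_semantics alpha tr"
  shows "tr x = tr y \<longleftrightarrow> phi_beta alpha (delta x) = phi_beta alpha (delta y)"
proof -
  have pd: "phi_beta alpha (delta z) w = (measure (tr z) (cyl w), measure (tr z) {Inl w})" for z w
    using phi_char[OF assms, of "delta z" w] unfolding supp_delta by (simp add: delta_def)
  have fm: "\<And>z. finite_measure (tr z)"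
    using assms(2) unfolding is_trace_semantics_def by (auto simp: subprob_space_def)
  show ?thesis
  proof
    assume "tr x = tr y" then show "phi_beta alpha (delta x) = phi_beta alpha (delta y)"
      by (simp add: fun_eq_iff pd)
  next
    assume h: "phi_beta alpha (delta x) = phi_beta alpha (delta y)"
    have e0: "(measure (tr x) (cyl w), measure (tr x) {Inl w}) = (measure (tr y) (cyl w), measure (tr y) {Inl w})" for w
      using fun_cong[OF h, of w] unfolding pd .
    have e1: "measure (tr x) (cyl w) = measure (tr y) (cyl w)" for w using e0[of w] by simp
    have e2: "measure (tr x) {Inl w} = measure (tr y) {Inl w}" for w using e0[of w] by simp
    have sets: "sets (tr z) = sigma_sets UNIV ainf_gens" for z
    proof -
      have "sets (tr z) = sets ainf" using assms(2) unfolding is_trace_semantics_def by simp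
      also have "\<dots> = sigma_sets UNIV ainf_gens" unfolding ainf_def by (rule sets_measure_of) simp
      finally show ?thesis .
    qed
    show "tr x = tr y"
    proof (rule measure_eqI_generator_eq[OF ist _ _ sets[of x] sets[of y], where A="\<lambda>_. UNIV"])
      fix X :: "('a list + 'a stream) set" assume "X \<in> ainf_gens"
      then consider "X = {}" | w where "X = {Inl w}" | w where "X = cyl w"
        unfolding ainf_gens_def by blast
      then show "emeasure (tr x) X = emeasure (tr y) X"
        by cases (simp_all add: fm finite_measure.emeasure_eq_measure e1 e2)
    next
      show "range (\<lambda>_. UNIV) \<subseteq> ainf_gens" by (auto simp: ainf_gens_def cyl_Nil[symmetric])
    qed (simp_all add: fm finite_measure.emeasure_eq_measure)
  qed
qed

end
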